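(* Let $n\ge 1$, let $B=(B_{ij})$ be a symmetric $n\times n$ matrix over $\mathbb{F}_2$ with zero diagonal, and let $f(x)=\sum_{i<j}B_{ij}x_ix_j$ be the associated boolean function on $\mathbb{Z}_2^n$. Let $\mathcal{C}_B\subseteq\mathbb{F}_2^{2n}$ be the code spanned over $\mathbb{F}_2$ by the rows of the $n\times 2n$ matrix $(B\mid I_n)$. Then the EPC distance of $f$ equals the binary distance $d_b$ of $\mathcal{C}_B$.
   Context: For $x\in\mathbb{Z}_2^n$, $w(x)$ is the Hamming weight. For $x,y\in\mathbb{Z}_2^n$, $x\preceq y$ means $x_j\le y_j$ for all $j$; $\bar a$ is the complement of $a$ ($\bar a_j=a_j+1\bmod 2$); $V_a=\{x: x\preceq a\}$ and, for $k\preceq\mu$, $k+V_{\bar\mu}=\{k+x: x\preceq\bar\mu\}$. Exponents of $(-1)$ are computed mod 2. Binary weight and binary distance: a vector $(\alpha,\beta)\in\mathbb{F}_2^{2n}$ (with $\alpha,\beta\in\mathbb{F}_2^n$) is viewed as a length-$n$ word whose $j$-th letter is the pair $(\alpha_j,\beta_j)$; its binary weight is $w_b(\alpha,\beta)=w_x+2w_y+w_z$, where $w_x,w_y,w_z$ count the indices $j$ with $(\alpha_j,\beta_j)=(1,0)$, $(1,1)$, $(0,1)$ respectively; equivalently $w_b(\alpha,\beta)=w(\alpha)+w(\beta)$. The binary distance $d_b$ of a code is the minimum binary weight of its nonzero codewords. EPC distance: for a boolean function $f$ and $a,k,\mu\in\mathbb{Z}_2^n$ with $k\preceq\mu$, the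 fixed-extended autocorrelation is $v(a,k,\mu)=\sum_{x\in k+V_{\bar\mu}}(-1)^{f(x)+f(x+a)}$. For integers $l\ge1$, $q\ge0$, $f$ satisfies EPC($l$) of order $q$ if $v(a,k,\mu)=0$ for all $a,k,\mu$ with $k\preceq\mu$, $1\le w(a)\le l$ and $0\le w(\mu)\le q$. The EPC distance of $f$ is the largest integer $d\ge1$ such that $f$ satisfies EPC($l$) of order $q$ for all $l\ge1,q\ge0$ with $l+q<d$ (equivalently, the minimum of $w(a)+w(\mu)$ over all $a\neq0$, $k\preceq\mu$ with $v(a,k,\mu)\neq0$). *)

theory Defs
  imports Main
begin

text \<open>Vectors of Z_2^n are represented as functions nat => bool that vanish
  outside the index range {0..<n} (True = 1, False = 0).\<close>

definition vecs :: "nat \<Rightarrow> (nat \<Rightarrow> bool) set" where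
  "vecs n = {x. \<forall>j. n \<le> j \<longrightarrow> \<not> x j}"

definition vadd :: "(nat \<Rightarrow> bool) \<Rightarrow> (nat \<Rightarrow> bool) \<Rightarrow> nat \<Rightarrow> bool" where
  "vadd x y = (\<lambda>j. x j \<noteq> y j)"

definition hweight :: "nat \<Rightarrow> (nat \<Rightarrow> bool) \<Rightarrow> nat" where
  "hweight n x = card {j. j < n \<and> x j}"

definition vpreceq :: "nat \<Rightarrow> (nat \<Rightarrow> bool) \<Rightarrow> (nat \<Rightarrow> bool) \<Rightarrow> bool" where
  "vpreceq n x y = (\<forall>j<n. x j \<longrightarrow> y j)"

definition vcompl :: "nat \<Rightarrow> (nat \<Rightarrow> bool) \<Rightarrow> nat \<Rightarrow> bool" where
  "vcompl n a = (\<lambda>j. j < n \<and> \<not> a j)"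

definition Vset :: "nat \<Rightarrow> (nat \<Rightarrow> bool) \<Rightarrow> (nat \<Rightarrow> bool) set" where
  "Vset n a = {x \<in> vecs n. vpreceq n x a}"

definition assoc_fun :: "nat \<Rightarrow> (nat \<Rightarrow> nat \<Rightarrow> bool) \<Rightarrow> (nat \<Rightarrow> bool) \<Rightarrow> bool" where
  "assoc_fun n B x = odd (card {(i, j). i < j \<and> j < n \<and> B i j \<and> x i \<and> x j})"

definition sgn1 :: "bool \<Rightarrow> int" where
  "sgn1 b = (if b then -1 else 1)"

definition fe_autocorr ::
  "nat \<Rightarrow> ((nat \<Rightarrow> bool) \<Rightarrow> bool) \<Rightarrow> (nat \<Rightarrow> bool) \<Rightarrow> (nat \<Rightarrow> bool) \<Rightarrow> (nat \<Rightarrow> bool) \<Rightarrow> int" where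
  "fe_autocorr n f a k \<mu> =
     (\<Sum>x \<in> (vadd k) ` Vset n (vcompl n \<mu>). sgn1 (f x \<noteq> f (vadd x a)))"

definition EPC :: "nat \<Rightarrow> ((nat \<Rightarrow> bool) \<Rightarrow> bool) \<Rightarrow> nat \<Rightarrow> nat \<Rightarrow> bool" where
  "EPC n f l q = (\<forall>a \<in> vecs n. \<forall>k \<in> vecs n. \<forall>\<mu> \<in> vecs n.
      vpreceq n k \<mu> \<and> 1 \<le> hweight n a \<and> hweight n a \<le> l \<and> hweight n \<mu> \<le> q
      \<longrightarrow> fe_autocorr n f a k \<mu> = 0)"

definition EPC_distance :: "nat \<Rightarrow> ((nat \<Rightarrow> bool) \<Rightarrow> bool) \<Rightarrow> nat" where
  "EPC_distance n f = (GREATEST d. 1 \<le> d \<and> (\<forall>l q. 1 \<le> l \<and> l + q < d \<longrightarrow> EPC n f l q))"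

definition f2sum :: "nat set \<Rightarrow> (nat \<Rightarrow> nat \<Rightarrow> bool) \<Rightarrow> nat \<Rightarrow> bool" where
  "f2sum S v = (\<lambda>j. odd (card {i \<in> S. v i j}))"

text \<open>The code C_B in F_2^{2n}, a vector written as a pair (alpha, beta):
  the F_2-span of the rows (B_i | e_i), i < n, of the matrix (B | I_n).\<close>
definition code_B :: "nat \<Rightarrow> (nat \<Rightarrow> nat \<Rightarrow> bool) \<Rightarrow> ((nat \<Rightarrow> bool) \<times> (nat \<Rightarrow> bool)) set" where
  "code_B n B = {(f2sum S (\<lambda>i j. j < n \<and> B i j), f2sum S (\<lambda>i j. j = i)) | S. S \<subseteq> {..<n}}"

definition bin_weight :: "nat \<Rightarrow> (nat \<Rightarrow> bool) \<times> (nat \<Rightarrow> bool) \<Rightarrow> nat" where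
  "bin_weight n c = hweight n (fst c) + hweight n (snd c)"

definition bin_distance :: "nat \<Rightarrow> ((nat \<Rightarrow> bool) \<times> (nat \<Rightarrow> bool)) set \<Rightarrow> nat" where
  "bin_distance n C = Min (bin_weight n ` {c \<in> C. c \<noteq> (\<lambda>_. False, \<lambda>_. False)})"

end

theory Submission imports Defs "HOL-Library.Z2" begin
declare add_bit_eq_xor[simp del] mult_bit_eq_and[simp del]

lemma of_nat_bit: "(of_nat m :: bit) = of_bool (odd m)"
  by (induction m) auto

lemma bb_odd_card: "finite A \<Longrightarrow> (of_bool (odd (card {p\<in>A. P p})) :: bit) = (\<Sum>p\<in>A. of_bool (P p))"
proof -
  assume f: "finite A"
  have "(of_bool (odd (card {p\<in>A. P p})) :: bit) = of_nat (card {p\<in>A. P p})" by (rule of_nat_bit[symmetric])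
  also have "\<dots> = (\<Sum>p\<in>{p\<in>A. P p}. 1)" by simp
  also have "\<dots> = (\<Sum>p\<in>A. of_bool (P p))" unfolding of_bool_def by (rule sum.inter_filter[OF f])
  finally show ?thesis .
qed

lemma bb_xor: "(of_bool (p \<noteq> q)::bit) = of_bool p + of_bool q"
  by (cases p; cases q) auto

lemma bb_inj: "((of_bool p :: bit) = of_bool q) = (p = q)"
  by (cases p; cases q) auto

definition Bv :: "nat \<Rightarrow> (nat \<Rightarrow> nat \<Rightarrow> bool) \<Rightarrow> (nat \<Rightarrow> bool) \<Rightarrow> nat \<Rightarrow> bool" where
  "Bv n B a = f2sum {i. i < n \<and> a i} (\<lambda>i j. j < n \<and> B i j)"

definition dot :: "nat \<Rightarrow> (nat \<Rightarrow> bool) \<Rightarrow> (nat \<Rightarrow> bool) \<Rightarrow> bool" where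
  "dot n x y = odd (card {j. j < n \<and> x j \<and> y j})"

lemma bb_dot: "(of_bool (dot n x y) :: bit) = (\<Sum>j<n. of_bool (x j) * of_bool (y j))"
proof -
  have e: "{j. j < n \<and> x j \<and> y j} = {j\<in>{..<n}. x j \<and> y j}" by auto
  show ?thesis unfolding dot_def e by (subst bb_odd_card) (auto simp: of_bool_conj)
qed

lemma bb_Bv: "j < n \<Longrightarrow> (of_bool (Bv n B a j) :: bit) = (\<Sum>i<n. of_bool (a i) * of_bool (B i j))"
proof -
  assume j: "j < n"
  have e: "{i \<in> {i. i < n \<and> a i}. j < n \<and> B i j} = {i\<in>{..<n}. a i \<and> B i j}" using j by auto
  show ?thesis unfolding Bv_def f2sum_def e by (subst bb_odd_card) (auto simp: of_bool_conj)
qed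

lemma bb_f: "(of_bool (assoc_fun n B x) :: bit) =
   (\<Sum>(i,j)\<in>{(i,j). i < j \<and> j < n}. of_bool (B i j) * of_bool (x i) * of_bool (x j))"
proof -
  have fin: "finite {(i,j). i < j \<and> j < (n::nat)}"
    by (rule finite_subset[of _ "{..<n} \<times> {..<n}"]) auto
  have e: "{(i, j). i < j \<and> j < n \<and> B i j \<and> x i \<and> x j} =
     {p\<in>{(i,j). i < j \<and> j < n}. case p of (i,j) \<Rightarrow> B i j \<and> x i \<and> x j}" by auto
  show ?thesis unfolding assoc_fun_def e
    by (subst bb_odd_card[OF fin]) (auto intro!: sum.cong)
qed

lemma quad:
  assumes sym: "\<forall>i<n. \<forall>j<n. B i j = B j i" and diag: "\<forall>i<n. \<not> B i i"
  shows "(of_bool (assoc_fun n B (vadd x a)) :: bit) =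
     of_bool (assoc_fun n B x) + of_bool (assoc_fun n B a) + of_bool (dot n x (Bv n B a))"
proof -
  define \<beta> where "\<beta> i j = (of_bool (B i j) :: bit)" for i j
  define X where "X i = (of_bool (x i) :: bit)" for i
  define A where "A i = (of_bool (a i) :: bit)" for i
  define P where "P = {(i,j). i < j \<and> j < (n::nat)}"
  define Q where "Q = {(i,j). j < i \<and> i < (n::nat)}"
  define D where "D = {(i,j). i = j \<and> i < (n::nat)}"
  have finP: "finite P" unfolding P_def
    by (rule finite_subset[of _ "{..<n} \<times> {..<n}"]) auto
  have finQ: "finite Q" unfolding Q_def
    by (rule finite_subset[of _ "{..<n} \<times> {..<n}"]) auto
  have finD: "finite D" unfolding D_def
    by (rule finite_subset[of _ "{..<n} \<times> {..<n}"]) auto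
  have L: "(of_bool (assoc_fun n B (vadd x a)) :: bit) = (\<Sum>(i,j)\<in>P. \<beta> i j * (X i + A i) * (X j + A j))"
    unfolding bb_f P_def \<beta>_def X_def A_def vadd_def bb_xor ..
  also have "\<dots> = (\<Sum>(i,j)\<in>P. \<beta> i j * X i * X j) + (\<Sum>(i,j)\<in>P. \<beta> i j * A i * A j)
      + ((\<Sum>(i,j)\<in>P. \<beta> i j * A i * X j) + (\<Sum>(i,j)\<in>P. \<beta> i j * X i * A j))"
  proof -
    have "(\<Sum>(i,j)\<in>P. \<beta> i j * (X i + A i) * (X j + A j)) = (\<Sum>(i,j)\<in>P. \<beta> i j * X i * X j + \<beta> i j * A i * A j
      + (\<beta> i j * A i * X j + \<beta> i j * X i * A j))"
      by (rule sum.cong) (auto simp del: add_bit_eq_xor mult_bit_eq_and simp: algebra_simps)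
    then show ?thesis by (simp only: sum.distrib split_def)
  qed
  also have "(\<Sum>(i,j)\<in>P. \<beta> i j * X i * A j) = (\<Sum>(i,j)\<in>Q. \<beta> i j * A i * X j)"
  proof -
    have "Q = prod.swap ` P" unfolding P_def Q_def by auto
    then have "(\<Sum>(i,j)\<in>Q. \<beta> i j * A i * X j) = (\<Sum>p\<in>P. (case prod.swap p of (i,j) \<Rightarrow> \<beta> i j * A i * X j))"
      by (simp add: sum.reindex)
    also have "\<dots> = (\<Sum>(i,j)\<in>P. \<beta> i j * X i * A j)"
      by (rule sum.cong) (auto simp: P_def \<beta>_def sym mult_ac)
    finally show ?thesis by simp
  qed
  also have "(\<Sum>(i,j)\<in>P. \<beta> i j * A i * X j) + (\<Sum>(i,j)\<in>Q. \<beta> i j * A i * X j)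
      = (\<Sum>(i,j)\<in>{..<n}\<times>{..<n}. \<beta> i j * A i * X j)"
  proof -
    have e: "{..<n}\<times>{..<n} = (P \<union> Q) \<union> D" unfolding P_def Q_def D_def by auto
    have d0: "(\<Sum>(i,j)\<in>D. \<beta> i j * A i * X j) = 0"
      by (rule sum.neutral) (auto simp: D_def \<beta>_def diag)
    have dPQ: "P \<inter> Q = {}" unfolding P_def Q_def by auto
    have dPQD: "(P \<union> Q) \<inter> D = {}" unfolding P_def Q_def D_def by auto
    have "(\<Sum>(i,j)\<in>(P \<union> Q) \<union> D. \<beta> i j * A i * X j) = (\<Sum>(i,j)\<in>P \<union> Q. \<beta> i j * A i * X j) + (\<Sum>(i,j)\<in>D. \<beta> i j * A i * X j)"
      by (rule sum.union_disjoint) (use finP finQ finD dPQD in auto)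
    also have "(\<Sum>(i,j)\<in>P \<union> Q. \<beta> i j * A i * X j) = (\<Sum>(i,j)\<in>P. \<beta> i j * A i * X j) + (\<Sum>(i,j)\<in>Q. \<beta> i j * A i * X j)"
      by (rule sum.union_disjoint) (use finP finQ dPQ in auto)
    finally show ?thesis unfolding e d0 by simp
  qed
  also have "(\<Sum>(i,j)\<in>{..<n}\<times>{..<n}. \<beta> i j * A i * X j) = of_bool (dot n x (Bv n B a))"
  proof -
    have "(of_bool (dot n x (Bv n B a)) :: bit) = (\<Sum>j<n. X j * (\<Sum>i<n. A i * \<beta> i j))"
      unfolding bb_dot X_def A_def \<beta>_def by (rule sum.cong) (auto simp: bb_Bv)
    also have "\<dots> = (\<Sum>j<n. \<Sum>i<n. \<beta> i j * A i * X j)"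
      by (simp add: sum_distrib_left mult_ac)
    also have "\<dots> = (\<Sum>i<n. \<Sum>j<n. \<beta> i j * A i * X j)" by (rule sum.swap)
    also have "\<dots> = (\<Sum>(i,j)\<in>{..<n}\<times>{..<n}. \<beta> i j * A i * X j)" by (rule sum.cartesian_product)
    finally show ?thesis by simp
  qed
  finally have R: "(of_bool (assoc_fun n B (vadd x a)) :: bit) = (\<Sum>(i,j)\<in>P. \<beta> i j * X i * X j) + (\<Sum>(i,j)\<in>P. \<beta> i j * A i * A j) + of_bool (dot n x (Bv n B a))" .
  have Fx: "(of_bool (assoc_fun n B x) :: bit) = (\<Sum>(i,j)\<in>P. \<beta> i j * X i * X j)"
    unfolding bb_f P_def \<beta>_def X_def ..
  have Fa: "(of_bool (assoc_fun n B a) :: bit) = (\<Sum>(i,j)\<in>P. \<beta> i j * A i * A j)"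
    unfolding bb_f P_def \<beta>_def A_def ..
  show ?thesis unfolding Fx Fa by (rule R)
qed

lemma quad_bool:
  assumes sym: "\<forall>i<n. \<forall>j<n. B i j = B j i" and diag: "\<forall>i<n. \<not> B i i"
  shows "(assoc_fun n B x \<noteq> assoc_fun n B (vadd x a)) = (assoc_fun n B a \<noteq> dot n x (Bv n B a))"
  using quad[OF sym diag, of x a]
  by (cases "assoc_fun n B x"; cases "assoc_fun n B a"; cases "dot n x (Bv n B a)";
      cases "assoc_fun n B (vadd x a)") (simp_all add: add_bit_eq_xor)

lemma dot_vadd: "dot n (vadd k y) c = (dot n k c \<noteq> dot n y c)"
proof -
  have "(of_bool (dot n (vadd k y) c) :: bit) = of_bool (dot n k c) + of_bool (dot n y c)"
    unfolding bb_dot vadd_def bb_xor sum.distrib[symmetric]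
    by (rule sum.cong) (simp_all add: algebra_simps)
  then show ?thesis by (simp only: bb_xor[symmetric] bb_inj)
qed

lemma vadd_vadd: "vadd (vadd k y) y = k" "vadd k (vadd k y) = y"
  unfolding vadd_def by auto

lemma finite_vecs: "finite (vecs n)"
proof (rule finite_subset)
  show "vecs n \<subseteq> (\<lambda>S j. j \<in> S) ` Pow {..<n}"
  proof
    fix x assume x: "x \<in> vecs n"
    have "x = (\<lambda>j. j \<in> {j. j < n \<and> x j})" using x unfolding vecs_def
      by (auto intro!: ext) (meson not_le)
    then show "x \<in> (\<lambda>S j. j \<in> S) ` Pow {..<n}" by blast
  qed
qed auto

lemma finite_Vset: "finite (Vset n m)"
  unfolding Vset_def using finite_vecs by auto

lemma sgn1_xor: "sgn1 (p \<noteq> q) = sgn1 p * sgn1 q"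
  unfolding sgn1_def by auto

lemma charsum_zero:
  assumes j: "j < n" "m j" "c j"
  shows "(\<Sum>y\<in>Vset n m. sgn1 (dot n y c)) = 0"
proof -
  define e where "e = (\<lambda>l. l = j)"
  have de: "dot n e c" unfolding dot_def e_def using j
  proof -
    have "{ja. ja < n \<and> ja = j \<and> c ja} = {j}" using j by auto
    then show "odd (card {ja. ja < n \<and> ja = j \<and> c ja})" by simp
  qed
  have mem: "vadd y e \<in> Vset n m" if "y \<in> Vset n m" for y
    using that j unfolding Vset_def vecs_def vpreceq_def vadd_def e_def by auto
  have "(\<Sum>y\<in>Vset n m. sgn1 (dot n y c)) = (\<Sum>y\<in>Vset n m. - sgn1 (dot n y c))"
  proof (rule sum.reindex_bij_witness[where i="\<lambda>y. vadd y e" and j="\<lambda>y. vadd y e"])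
    fix y assume "y \<in> Vset n m"
    show "vadd (vadd y e) e = y" unfolding vadd_def by auto
    show "vadd y e \<in> Vset n m" by (rule mem) fact
    show "- sgn1 (dot n (vadd y e) c) = sgn1 (dot n y c)"
      unfolding dot_vadd using de by (auto simp: sgn1_def)
  next
    fix y assume "y \<in> Vset n m"
    show "vadd (vadd y e) e = y" unfolding vadd_def by auto
    show "vadd y e \<in> Vset n m" by (rule mem) fact
  qed
  then show ?thesis by (simp add: sum_negf)
qed

lemma charsum_nonzero:
  assumes "\<forall>j<n. m j \<longrightarrow> \<not> c j"
  shows "(\<Sum>y\<in>Vset n m. sgn1 (dot n y c)) \<noteq> 0"
proof -
  have "(\<Sum>y\<in>Vset n m. sgn1 (dot n y c)) = (\<Sum>y\<in>Vset n m. 1)"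
  proof (rule sum.cong)
    fix y assume "y \<in> Vset n m"
    then have "{j. j < n \<and> y j \<and> c j} = {}" using assms unfolding Vset_def vpreceq_def by auto
    then have "\<not> dot n y c" unfolding dot_def by (metis card.empty even_zero)
    then show "sgn1 (dot n y c) = 1" unfolding sgn1_def by simp
  qed simp
  also have "\<dots> = int (card (Vset n m))" by simp
  also have "\<dots> \<noteq> 0"
  proof -
    have "(\<lambda>_. False) \<in> Vset n m" unfolding Vset_def vecs_def vpreceq_def by auto
    then show ?thesis using finite_Vset[of n m] by (auto simp: card_eq_0_iff)
  qed
  finally show ?thesis .
qed

lemma autocorr:
  assumes sym: "\<forall>i<n. \<forall>j<n. B i j = B j i" and diag: "\<forall>i<n. \<not> B i i"
  shows "(fe_autocorr n (assoc_fun n B) a k \<mu> \<noteq> 0) = (\<forall>j<n. Bv n B a j \<longrightarrow> \<mu> j)"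
proof -
  let ?f = "assoc_fun n B" and ?c = "Bv n B a" and ?V = "Vset n (vcompl n \<mu>)"
  have inj: "inj_on (vadd k) ?V" by (metis inj_onI vadd_vadd(2))
  have "fe_autocorr n ?f a k \<mu> = (\<Sum>y\<in>?V. sgn1 (?f (vadd k y) \<noteq> ?f (vadd (vadd k y) a)))"
    unfolding fe_autocorr_def by (simp add: sum.reindex[OF inj])
  also have "\<dots> = (\<Sum>y\<in>?V. sgn1 (?f a \<noteq> dot n k ?c) * sgn1 (dot n y ?c))"
  proof (rule sum.cong[OF refl])
    fix y
    have q: "(?f (vadd k y) \<noteq> ?f (vadd (vadd k y) a)) = (?f a \<noteq> (dot n k ?c \<noteq> dot n y ?c))"
      using quad_bool[OF sym diag, of "vadd k y" a] dot_vadd[of n k y ?c] by simp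
    show "sgn1 (?f (vadd k y) \<noteq> ?f (vadd (vadd k y) a)) = sgn1 (?f a \<noteq> dot n k ?c) * sgn1 (dot n y ?c)"
      unfolding q sgn1_def by auto
  qed
  also have "\<dots> = sgn1 (?f a \<noteq> dot n k ?c) * (\<Sum>y\<in>?V. sgn1 (dot n y ?c))"
    by (simp add: sum_distrib_left)
  finally have e: "fe_autocorr n ?f a k \<mu> = sgn1 (?f a \<noteq> dot n k ?c) * (\<Sum>y\<in>?V. sgn1 (dot n y ?c))" .
  have s0: "sgn1 b \<noteq> 0" for b unfolding sgn1_def by auto
  show ?thesis
  proof
    assume "fe_autocorr n ?f a k \<mu> \<noteq> 0"
    then have ne: "(\<Sum>y\<in>?V. sgn1 (dot n y ?c)) \<noteq> 0" using e by auto
    show "\<forall>j<n. ?c j \<longrightarrow> \<mu> j"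
    proof (intro allI impI, rule ccontr)
      fix j assume "j < n" "?c j" "\<not> \<mu> j"
      then have "(\<Sum>y\<in>?V. sgn1 (dot n y ?c)) = 0"
        by (intro charsum_zero[of j]) (auto simp: vcompl_def)
      then show False using ne by simp
    qed
  next
    assume "\<forall>j<n. ?c j \<longrightarrow> \<mu> j"
    then have "(\<Sum>y\<in>?V. sgn1 (dot n y ?c)) \<noteq> 0"
      by (intro charsum_nonzero) (auto simp: vcompl_def)
    then show "fe_autocorr n ?f a k \<mu> \<noteq> 0" using e s0 by simp
  qed
qed

lemma Bv_vecs: "Bv n B a \<in> vecs n"
  unfolding vecs_def Bv_def f2sum_def by auto

lemma hweight_pos: "a \<in> vecs n \<Longrightarrow> (1 \<le> hweight n a) = (a \<noteq> (\<lambda>_. False))"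
proof -
  assume a: "a \<in> vecs n"
  have fin: "finite {j. j < n \<and> a j}" by auto
  have "(1 \<le> hweight n a) = ({j. j < n \<and> a j} \<noteq> {})"
    unfolding hweight_def using fin by (simp add: Suc_le_eq card_gt_0_iff)
  also have "\<dots> = (a \<noteq> (\<lambda>_. False))" using a unfolding vecs_def
    by (auto simp: fun_eq_iff) (meson not_le)
  finally show ?thesis .
qed

lemma hweight_mono: "\<forall>j<n. c j \<longrightarrow> \<mu> j \<Longrightarrow> hweight n c \<le> hweight n \<mu>"
  unfolding hweight_def by (rule card_mono) auto

lemma code_nonzero:
  "{c \<in> code_B n B. c \<noteq> (\<lambda>_. False, \<lambda>_. False)} =
   (\<lambda>a. (Bv n B a, a)) ` {a \<in> vecs n. a \<noteq> (\<lambda>_. False)}"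
proof (intro equalityI subsetI)
  fix c assume "c \<in> {c \<in> code_B n B. c \<noteq> (\<lambda>_. False, \<lambda>_. False)}"
  then obtain S where S: "S \<subseteq> {..<n}" and c: "c = (f2sum S (\<lambda>i j. j < n \<and> B i j), f2sum S (\<lambda>i j. j = i))"
    and nz: "c \<noteq> (\<lambda>_. False, \<lambda>_. False)"
    unfolding code_B_def by blast
  define a where "a = (\<lambda>i. i \<in> S)"
  have Sa: "{i. i < n \<and> a i} = S" using S unfolding a_def by auto
  have 1: "f2sum S (\<lambda>i j. j < n \<and> B i j) = Bv n B a" unfolding Bv_def Sa ..
  have 2: "f2sum S (\<lambda>i j. j = i) = a"
  proof
    fix j
    have "{i \<in> S. j = i} = (if j \<in> S then {j} else {})" by auto
    then show "f2sum S (\<lambda>i j. j = i) j = a j" unfolding f2sum_def a_def by simp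
  qed
  have av: "a \<in> vecs n" using S unfolding vecs_def a_def by auto
  have "a \<noteq> (\<lambda>_. False)"
  proof
    assume "a = (\<lambda>_. False)"
    then have "S = {}" unfolding a_def by (auto simp: fun_eq_iff)
    then show False using nz unfolding c f2sum_def by auto
  qed
  then show "c \<in> (\<lambda>a. (Bv n B a, a)) ` {a \<in> vecs n. a \<noteq> (\<lambda>_. False)}"
    using av unfolding c 1 2 by blast
next
  fix c assume "c \<in> (\<lambda>a. (Bv n B a, a)) ` {a \<in> vecs n. a \<noteq> (\<lambda>_. False)}"
  then obtain a where a: "a \<in> vecs n" "a \<noteq> (\<lambda>_. False)" and c: "c = (Bv n B a, a)" by blast
  define S where "S = {i. i < n \<and> a i}"
  have aS: "a = (\<lambda>i. i \<in> S)" using a(1) unfolding S_def vecs_def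
    by (auto simp: fun_eq_iff) (meson not_le)
  have 2: "f2sum S (\<lambda>i j. j = i) = a"
  proof
    fix j
    have "{i \<in> S. j = i} = (if j \<in> S then {j} else {})" by auto
    then show "f2sum S (\<lambda>i j. j = i) j = a j" unfolding f2sum_def aS by simp
  qed
  have "c \<in> code_B n B" unfolding code_B_def c Bv_def
    by (rule CollectI, rule exI[of _ S]) (use 2 in \<open>auto simp: S_def\<close>)
  moreover have "c \<noteq> (\<lambda>_. False, \<lambda>_. False)" using a(2) c by auto
  ultimately show "c \<in> {c \<in> code_B n B. c \<noteq> (\<lambda>_. False, \<lambda>_. False)}" by blast
qed

theorem theorem4p1:
  fixes n :: nat and B :: "nat \<Rightarrow> nat \<Rightarrow> bool"
  assumes "1 \<le> n"
    and "\<forall>i<n. \<forall>j<n. B i j = B j i"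
    and "\<forall>i<n. \<not> B i i"
  shows "EPC_distance n (assoc_fun n B) = bin_distance n (code_B n B)"
proof -
  note sym = assms(2) and diag = assms(3)
  define W where "W = {a \<in> vecs n. a \<noteq> (\<lambda>_. False)}"
  define wt where "wt a = hweight n a + hweight n (Bv n B a)" for a
  have Wfin: "finite W" unfolding W_def using finite_vecs by auto
  have Wne: "(\<lambda>i. i = 0) \<in> W" using assms(1) unfolding W_def vecs_def by (auto simp: fun_eq_iff)
  have bd: "bin_distance n (code_B n B) = Min (wt ` W)"
  proof -
    have "bin_weight n ` {c \<in> code_B n B. c \<noteq> (\<lambda>_. False, \<lambda>_. False)} = wt ` W"
      unfolding code_nonzero W_def image_image bin_weight_def wt_def by (simp add: add.commute)
    then show ?thesis unfolding bin_distance_def by simp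
  qed
  define m where "m = Min (wt ` W)"
  have m_le: "m \<le> wt a" if "a \<in> W" for a unfolding m_def using Wfin that by simp
  have "m \<in> wt ` W" unfolding m_def
    by (rule Min_in) (use Wfin Wne in auto)
  then obtain a0 where a0: "a0 \<in> W" "wt a0 = m" by auto
  have a0v: "a0 \<in> vecs n" and a0w: "1 \<le> hweight n a0" using a0(1) hweight_pos[of a0 n] unfolding W_def by auto
  have m1: "1 \<le> m" using a0 a0w unfolding wt_def by simp
  have good: "\<forall>l q. 1 \<le> l \<and> l + q < m \<longrightarrow> EPC n (assoc_fun n B) l q"
  proof (intro allI impI)
    fix l q assume lq: "1 \<le> l \<and> l + q < m"
    show "EPC n (assoc_fun n B) l q" unfolding EPC_def
    proof (intro ballI impI)
      fix a k \<mu> assume v: "a \<in> vecs n" "k \<in> vecs n" "\<mu> \<in> vecs n"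
        and c: "vpreceq n k \<mu> \<and> 1 \<le> hweight n a \<and> hweight n a \<le> l \<and> hweight n \<mu> \<le> q"
      show "fe_autocorr n (assoc_fun n B) a k \<mu> = 0"
      proof (rule ccontr)
        assume "fe_autocorr n (assoc_fun n B) a k \<mu> \<noteq> 0"
        then have "\<forall>j<n. Bv n B a j \<longrightarrow> \<mu> j" using autocorr[OF sym diag] by blast
        then have "hweight n (Bv n B a) \<le> hweight n \<mu>" by (rule hweight_mono)
        moreover have "a \<in> W" using v c hweight_pos[of a n] unfolding W_def by auto
        then have "m \<le> wt a" by (rule m_le)
        ultimately show False using c lq unfolding wt_def by linarith
      qed
    qed
  qed
  have best: "d \<le> m" if d: "1 \<le> d \<and> (\<forall>l q. 1 \<le> l \<and> l + q < d \<longrightarrow> EPC n (assoc_fun n B) l q)" for d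
  proof (rule ccontr)
    assume "\<not> d \<le> m"
    then have "EPC n (assoc_fun n B) (hweight n a0) (hweight n (Bv n B a0))"
      using d a0 a0w unfolding wt_def by auto
    moreover have "vpreceq n (\<lambda>_. False) (Bv n B a0)" unfolding vpreceq_def by auto
    moreover have "(\<lambda>_. False) \<in> vecs n" unfolding vecs_def by auto
    ultimately have "fe_autocorr n (assoc_fun n B) a0 (\<lambda>_. False) (Bv n B a0) = 0"
      unfolding EPC_def using a0v a0w Bv_vecs[of n B a0] by simp
    moreover have "fe_autocorr n (assoc_fun n B) a0 (\<lambda>_. False) (Bv n B a0) \<noteq> 0"
      using autocorr[OF sym diag] by blast
    ultimately show False by simp
  qed
  have "EPC_distance n (assoc_fun n B) = m"
    unfolding EPC_distance_def
    by (rule Greatest_equality) (use m1 good best in auto)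
  then show ?thesis using bd m_def by simp
qed

end
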